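(* Let $T$ be a string of length $n$, let $1 \le i \le j \le n$, let $T[i..t]$ be the longest palindromic prefix and $T[s..j]$ the longest palindromic suffix of $T[i..j]$. Let $L$ be the maximum length of a maximal palindrome $T[p..q]$ of $T$ whose center $c = \frac{p+q}{2}$ satisfies $\frac{i+t}{2} < c < \frac{s+j}{2}$ (with $L = 0$ if no such center exists). Then the length of a longest palindromic substring of $T[i..j]$ equals $\max\{\,t-i+1,\; j-s+1,\; L\,\}$. Equivalently, defining the array $\mathsf{MP}[1..2n-1]$ by letting $\mathsf{MP}[2c-1]$ be the length of the maximal palindrome of $T$ with center $c$ for each $c \in \{1, 1.5, 2, \ldots, n-0.5, n\}$, we have $L = \max\{\mathsf{MP}[k] : i+t \le k \le s+j-2\}$ when $i+t \le s+j-2$.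
   Context: Strings are 1-indexed: $T[k]$ is the $k$-th character and $T[i..j] = T[i]\cdots T[j]$. A palindrome is a string equal to its reversal. The center of $T[p..q]$ is $\frac{p+q}{2}$. A palindromic substring $T[p..q]$ is a maximal palindrome in $T$ if $p = 1$, $q = n$, or $T[p-1] \ne T[q+1]$; for each integer or half-integer $c$ with $1 \le c \le n$ there is exactly one maximal palindrome with center $c$ (for half-integer $c$ it may be empty). The longest palindromic prefix (suffix) of $T[i..j]$ is the longest prefix (suffix) of $T[i..j]$ that is a palindrome. *)

theory Defs
  imports Main "HOL-Library.Sublist"
begin

text \<open>Strings are lists; positions are 1-indexed. sub T i j is T[i..j]
  (the empty string when j = i - 1).\<close>
definition sub :: "'a list \<Rightarrow> nat \<Rightarrow> nat \<Rightarrow> 'a list" where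
  "sub T i j = take (Suc j - i) (drop (i - 1) T)"

definition pal :: "'a list \<Rightarrow> bool" where
  "pal xs \<longleftrightarrow> rev xs = xs"

text \<open>T[p..q] (1 <= p <= q+1 <= n+1, possibly empty) is a maximal palindrome of T.
  Its center is (p+q)/2; we work with doubled centers p+q.\<close>
definition maxpal :: "'a list \<Rightarrow> nat \<Rightarrow> nat \<Rightarrow> bool" where
  "maxpal T p q \<longleftrightarrow> 1 \<le> p \<and> p \<le> Suc q \<and> q \<le> length T \<and> pal (sub T p q) \<and>
     (p = 1 \<or> q = length T \<or> T ! (p - 2) \<noteq> T ! q)"

definition lps_len :: "'a list \<Rightarrow> nat" where
  "lps_len xs = Max {length ys | ys. sublist ys xs \<and> pal ys}"

definition MP :: "'a list \<Rightarrow> nat \<Rightarrow> nat" where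
  "MP T k = (THE m. \<exists>p q. maxpal T p q \<and> p + q = k + 1 \<and> m = Suc q - p)"

end

theory Submission
  imports Defs
begin

definition palT :: "'a list \<Rightarrow> nat \<Rightarrow> nat \<Rightarrow> bool" where
  "palT T p q \<longleftrightarrow> (\<forall>k. p \<le> k \<and> k \<le> q \<longrightarrow> T!(k-1) = T!(p+q-k-1))"

lemma pal_nth: "pal xs \<longleftrightarrow> (\<forall>k<length xs. xs!k = xs!(length xs - Suc k))"
  unfolding pal_def
proof
  assume "rev xs = xs" then show "\<forall>k<length xs. xs!k = xs!(length xs - Suc k)"
    by (metis rev_nth)
next
  assume H: "\<forall>k<length xs. xs!k = xs!(length xs - Suc k)"
  show "rev xs = xs"
  proof (rule nth_equalityI)
    show "length (rev xs) = length xs" by simp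
    fix k assume "k < length (rev xs)"
    then have k: "k < length xs" by simp
    then have "rev xs ! k = xs ! (length xs - Suc k)" by (rule rev_nth)
    also have "\<dots> = xs ! k" using H k by metis
    finally show "rev xs ! k = xs ! k" .
  qed
qed

lemma len_sub: "q \<le> length T \<Longrightarrow> 1 \<le> p \<Longrightarrow> length (sub T p q) = Suc q - p"
  by (simp add: sub_def)

lemma pal_iff:
  assumes "1 \<le> p" "p \<le> Suc q" "q \<le> length T"
  shows "pal (sub T p q) \<longleftrightarrow> palT T p q"
proof -
  have len: "length (sub T p q) = Suc q - p" using assms by (simp add: sub_def)
  have nth: "\<And>k. k < Suc q - p \<Longrightarrow> sub T p q ! k = T ! (p - 1 + k)" using assms by (simp add: sub_def)
  show ?thesis
  proof
    assume P: "pal (sub T p q)"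
    show "palT T p q" unfolding palT_def
    proof (intro allI impI)
      fix K assume K: "p \<le> K \<and> K \<le> q"
      have k: "K - p < Suc q - p" using K by arith
      have e1: "Suc q - p - Suc (K - p) < Suc q - p" using K by arith
      have "sub T p q ! (K-p) = sub T p q ! (Suc q - p - Suc (K - p))" using P k len pal_nth by metis
      moreover have "p - 1 + (K - p) = K - 1" using K assms(1) by arith
      moreover have "p - 1 + (Suc q - p - Suc (K - p)) = p+q-K-1" using K assms(1) by arith
      ultimately show "T!(K-1) = T!(p+q-K-1)" using nth[OF k] nth[OF e1] by simp
    qed
  next
    assume P: "palT T p q"
    show "pal (sub T p q)" unfolding pal_nth len
    proof (intro allI impI)
      fix k assume k: "k < Suc q - p"
      have e1: "Suc q - p - Suc k < Suc q - p" using k by arith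
      have "T!(p+k-1) = T!(p+q-(p+k)-1)" using P k unfolding palT_def by auto
      moreover have "p - 1 + k = p+k-1" using assms(1) by arith
      moreover have "p - 1 + (Suc q - p - Suc k) = p+q-(p+k)-1" using k assms(1) by arith
      ultimately show "sub T p q ! k = sub T p q ! (Suc q - p - Suc k)" using nth[OF k] nth[OF e1] by simp
    qed
  qed
qed

lemma shrink:
  assumes P: "palT T a b" and "a \<le> p" and s: "p + q = a + b"
  shows "palT T p q"
  unfolding palT_def
proof (intro allI impI)
  fix k assume "p \<le> k \<and> k \<le> q"
  then have "a \<le> k \<and> k \<le> b" using assms by linarith
  then have "T!(k-1) = T!(a+b-k-1)" using P unfolding palT_def by blast
  then show "T!(k-1) = T!(p+q-k-1)" by (simp only: s)
qed

lemma ext: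
  "palT T p q \<Longrightarrow> 1 \<le> p \<Longrightarrow> p \<le> Suc q \<Longrightarrow> q \<le> length T \<Longrightarrow>
   \<exists>p' q'. maxpal T p' q' \<and> p'+q' = p+q \<and> p' \<le> p"
proof (induction p arbitrary: q rule: less_induct)
  case (less p)
  show ?case
  proof (cases "maxpal T p q")
    case True thus ?thesis by blast
  next
    case False
    have pq: "pal (sub T p q)" using less.prems pal_iff by blast
    then have ne: "p \<noteq> 1" "q \<noteq> length T" "T!(p-2) = T!q" using less.prems False
      unfolding maxpal_def by auto
    have p2: "p \<ge> 2" using ne(1) less.prems(2) by arith
    have s: "p - 1 + Suc q = p + q" using p2 by arith
    have "palT T (p-1) (Suc q)" unfolding palT_def
    proof (intro allI impI)
      fix k assume k: "p - 1 \<le> k \<and> k \<le> Suc q"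
      consider "k = p-1" | "k = Suc q" | "p \<le> k \<and> k \<le> q" using k by arith
      then show "T!(k-1) = T!(p-1+Suc q-k-1)"
      proof cases
        case 1 then have "k - 1 = p-2" "p-1+Suc q-k-1 = q" using p2 by arith+
        then show ?thesis using ne(3) by simp
      next
        case 2 then have "k-1 = q" "p-1+Suc q-k-1 = p-2" using p2 by arith+
        then show ?thesis using ne(3) by simp
      next
        case 3
        have "T!(k-1) = T!(p+q-k-1)" using 3 less.prems(1) unfolding palT_def by blast
        then show ?thesis by (simp only: s)
      qed
    qed
    moreover have "p - 1 < p" "1 \<le> p - 1" "p - 1 \<le> Suc (Suc q)" "Suc q \<le> length T"
      using p2 less.prems ne(2) by arith+
    ultimately obtain p' q' where "maxpal T p' q'" "p'+q' = p-1+Suc q" "p' \<le> p-1"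
      using less.IH by blast
    then show ?thesis using s by (metis diff_le_self le_trans)
  qed
qed

lemma uniq_aux:
  assumes "maxpal T p q" "maxpal T p' q'" "p+q = p'+q'"
  shows "\<not> p' < p"
proof
  assume lt: "p' < p"
  have P: "palT T p' q'" using assms(2) pal_iff unfolding maxpal_def by blast
  have m1: "1 \<le> p" "p \<le> Suc q" "q \<le> length T" "1 \<le> p'" "p' \<le> Suc q'" "q' \<le> length T"
    using assms(1,2) unfolding maxpal_def by blast+
  have "p' \<le> p - 1" "p - 1 \<le> q'" using lt m1 assms(3) by arith+
  with P have "T!(p-1-1) = T!(p'+q'-(p-1)-1)" unfolding palT_def by blast
  moreover have "p-1-1 = p-2" "p'+q'-(p-1)-1 = q" using lt m1 assms(3) by arith+
  ultimately have "T!(p-2) = T!q" by simp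
  moreover have "p \<noteq> 1" "q \<noteq> length T" using lt m1 assms(3) by arith+
  ultimately show False using assms(1) unfolding maxpal_def by blast
qed

lemma uniq: "maxpal T p q \<Longrightarrow> maxpal T p' q' \<Longrightarrow> p+q = p'+q' \<Longrightarrow> p = p'"
  by (metis linorder_neqE_nat uniq_aux)

lemma MP_eq:
  assumes "maxpal T p q"
  shows "MP T (p+q-1) = Suc q - p"
proof -
  have p1: "p + q - 1 + 1 = p + q" using assms unfolding maxpal_def by arith
  show ?thesis unfolding MP_def p1
  proof (rule the_equality)
    show "\<exists>p' q'. maxpal T p' q' \<and> p' + q' = p + q \<and> Suc q - p = Suc q' - p'" using assms by blast
  next
    fix m assume "\<exists>p' q'. maxpal T p' q' \<and> p' + q' = p + q \<and> m = Suc q' - p'"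
    then obtain p' q' where "maxpal T p' q'" "p' + q' = p + q" "m = Suc q' - p'" by blast
    then show "m = Suc q - p" using uniq[OF assms] by (metis add_left_cancel)
  qed
qed

lemma sub_sub:
  assumes "1 \<le> i" "i \<le> p" "q \<le> j"
  shows "take (Suc q - p) (drop (p - i) (sub T i j)) = sub T p q"
proof -
  have "i - 1 + (p - i) = p - 1" "Suc j - i - (p - i) = Suc j - p" using assms by arith+
  moreover have "min (Suc q - p) (Suc j - p) = Suc q - p" using assms by simp
  ultimately show ?thesis unfolding sub_def by (simp add: drop_take take_take add.commute)
qed

lemma sublist_sub_iff:
  assumes "1 \<le> i" "i \<le> j" "j \<le> length T"
  shows "sublist ys (sub T i j) \<longleftrightarrow> (\<exists>p q. i \<le> p \<and> p \<le> Suc q \<and> q \<le> j \<and> ys = sub T p q)"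
proof
  assume "sublist ys (sub T i j)"
  then obtain ps ss where X: "sub T i j = ps @ ys @ ss" unfolding sublist_def by blast
  have lx: "length (sub T i j) = Suc j - i" using len_sub assms by (metis le_trans)
  then have le: "length ps + length ys \<le> Suc j - i" using X by (metis le_add1 add.assoc length_append)
  define p where "p = i + length ps"
  define q where "q = p + length ys - 1"
  have ys: "ys = take (length ys) (drop (length ps) (sub T i j))" using X by simp
  have a: "Suc q - p = length ys" "p - i = length ps" "q \<le> j" "i \<le> p" "p \<le> Suc q"
    using le assms unfolding p_def q_def by arith+
  have "ys = sub T p q" using ys sub_sub[OF assms(1) a(4) a(3), of T] a(1,2) by simp
  then show "\<exists>p q. i \<le> p \<and> p \<le> Suc q \<and> q \<le> j \<and> ys = sub T p q" using a by blast
next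
  assume "\<exists>p q. i \<le> p \<and> p \<le> Suc q \<and> q \<le> j \<and> ys = sub T p q"
  then obtain p q where a: "i \<le> p" "q \<le> j" "ys = sub T p q" by blast
  have "ys = take (Suc q - p) (drop (p - i) (sub T i j))" by (subst sub_sub[OF assms(1) a(1,2)]) (rule a(3))
  moreover have "sub T i j = take (p-i) (sub T i j) @ take (Suc q - p) (drop (p - i) (sub T i j))
     @ drop (Suc q - p) (drop (p - i) (sub T i j))" by (simp only: append_take_drop_id)
  ultimately show "sublist ys (sub T i j)" unfolding sublist_def by blast
qed

lemma inner:
  assumes "1 \<le> i" "j \<le> length T" "i \<le> t" "t \<le> j"
    and pre: "\<forall>t'. t < t' \<and> t' \<le> j \<longrightarrow> \<not> pal (sub T i t')"
    and "i \<le> s" "s \<le> j"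
    and suf: "\<forall>s'. i \<le> s' \<and> s' < s \<longrightarrow> \<not> pal (sub T s' j)"
    and P: "palT T a b" and r: "i+t < a+b" "a+b < s+j"
  shows "i \<le> a \<and> b \<le> j"
proof (rule ccontr)
  assume c: "\<not> (i \<le> a \<and> b \<le> j)"
  show False
  proof (cases "a+b \<le> i+j")
    case True
    then have "a \<le> i" using c by arith
    moreover have "i + (a+b-i) = a + b" using r assms by arith
    ultimately have "palT T i (a+b-i)" using shrink P by blast
    moreover have "t < a+b-i" "a+b-i \<le> j" using r True by arith+
    moreover have "i \<le> Suc (a+b-i)" "a+b-i \<le> length T" using r True assms by arith+
    ultimately have "pal (sub T i (a+b-i))" using pal_iff[OF assms(1)] by blast
    with pre \<open>t < a+b-i\<close> \<open>a+b-i \<le> j\<close> show False by blast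
  next
    case False
    then have "b > j" using c by arith
    then have "a \<le> a+b-j" "(a+b-j) + j = a + b" by arith+
    then have "palT T (a+b-j) j" using shrink P by blast
    moreover have "i \<le> a+b-j" "a+b-j < s" "1 \<le> a+b-j" "a+b-j \<le> Suc j" using r False assms by arith+
    ultimately have "pal (sub T (a+b-j) j)" using pal_iff assms by blast
    with suf \<open>i \<le> a+b-j\<close> \<open>a+b-j < s\<close> show False by blast
  qed
qed

lemma center_ex:
  assumes "3 \<le> m" "m \<le> 2 * length T"
  shows "\<exists>p q. maxpal T p q \<and> p + q = m"
proof -
  have "\<exists>h. m = 2*h \<or> m = Suc (2*h)" by presburger
  then obtain h where hh: "m = 2*h \<or> m = Suc (2*h)" by blast
  have P0: "palT T (m - h) h" unfolding palT_def
  proof (intro allI impI)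
    fix r assume "m - h \<le> r \<and> r \<le> h"
    then have "m - h + h - r - 1 = r - 1" using hh by arith
    then show "T ! (r - 1) = T ! (m - h + h - r - 1)" by simp
  qed
  have c0: "1 \<le> m - h" "m - h \<le> Suc h" "h \<le> length T" "m - h + h = m"
    using hh assms by arith+
  show ?thesis using ext[OF P0 c0(1-3)] c0(4) by metis
qed

theorem mainTheorem5:
  fixes T :: "'a list" and i j t s L :: nat
  assumes "1 \<le> i" "i \<le> j" "j \<le> length T"
    and "i \<le> t" "t \<le> j" "pal (sub T i t)"
    and "\<forall>t'. t < t' \<and> t' \<le> j \<longrightarrow> \<not> pal (sub T i t')"
    and "i \<le> s" "s \<le> j" "pal (sub T s j)"
    and "\<forall>s'. i \<le> s' \<and> s' < s \<longrightarrow> \<not> pal (sub T s' j)"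
    and "L = Max ({Suc q - p | p q. maxpal T p q \<and> i + t < p + q \<and> p + q < s + j} \<union> {0})"
  shows "lps_len (sub T i j) = max (Suc t - i) (max (Suc j - s) L)
         \<and> (i + t \<le> s + j - 2 \<longrightarrow> L = Max (MP T ` {i + t .. s + j - 2}))"
proof -
  define A where "A = {Suc q - p | p q. maxpal T p q \<and> i + t < p + q \<and> p + q < s + j}"
  have LA: "L = Max (A \<union> {0})" using assms(12) unfolding A_def by simp
  have Asub: "A \<subseteq> {..Suc (length T)}" unfolding A_def maxpal_def by auto
  have finA: "finite A" using finite_subset[OF Asub] by simp
  have L_ge: "\<And>x. x \<in> A \<Longrightarrow> x \<le> L" using finA LA by simp
  have L_in: "L \<in> A \<or> L = 0" using finA LA Max_in[of "A \<union> {0}"] by auto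
  define S where "S = {length ys | ys. sublist ys (sub T i j) \<and> pal ys}"
  define M where "M = max (Suc t - i) (max (Suc j - s) L)"
  have sl: "\<And>ys. sublist ys (sub T i j) \<longleftrightarrow> (\<exists>p q. i \<le> p \<and> p \<le> Suc q \<and> q \<le> j \<and> ys = sub T p q)"
    using sublist_sub_iff assms(1-3) by blast
  have memS: "\<And>p q. i \<le> p \<Longrightarrow> p \<le> Suc q \<Longrightarrow> q \<le> j \<Longrightarrow> pal (sub T p q) \<Longrightarrow> Suc q - p \<in> S"
  proof -
    fix p q assume h: "i \<le> p" "p \<le> Suc q" "q \<le> j" "pal (sub T p q)"
    have "length (sub T p q) = Suc q - p" using len_sub h assms by (metis le_trans)
    moreover have "sublist (sub T p q) (sub T i j)" using sl h by blast
    ultimately have "\<exists>ys. Suc q - p = length ys \<and> sublist ys (sub T i j) \<and> pal ys" using h(4) by metis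
    then show "Suc q - p \<in> S" unfolding S_def by simp
  qed
  have finS: "finite S"
  proof -
    have "S \<subseteq> {..length (sub T i j)}" unfolding S_def using sublist_length_le by auto
    then show ?thesis using finite_subset by blast
  qed
  have upper: "\<And>y. y \<in> S \<Longrightarrow> y \<le> M"
  proof -
    fix y assume "y \<in> S"
    then obtain ys where ys: "y = length ys" "sublist ys (sub T i j)" "pal ys" unfolding S_def by blast
    then obtain p q where pq: "i \<le> p" "p \<le> Suc q" "q \<le> j" "ys = sub T p q" using sl by blast
    have y: "y = Suc q - p" using len_sub pq ys assms by (metis le_trans)
    have P: "palT T p q" using pal_iff pq ys assms by (metis le_trans)
    consider "p + q \<le> i + t" | "s + j \<le> p + q" | "i + t < p + q \<and> p + q < s + j" by arith
    then show "y \<le> M"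
    proof cases
      case 1 then have "y \<le> Suc t - i" using y pq by arith
      then show ?thesis unfolding M_def by simp
    next
      case 2 then have "y \<le> Suc j - s" using y pq by arith
      then show ?thesis unfolding M_def by simp
    next
      case 3
      obtain p' q' where m: "maxpal T p' q'" "p'+q' = p+q" "p' \<le> p"
        using ext[OF P] pq assms by (metis le_trans)
      then have "Suc q' - p' \<in> A" using 3 unfolding A_def by (metis (mono_tags, lifting) mem_Collect_eq)
      then have "Suc q' - p' \<le> L" using L_ge by blast
      moreover have "y \<le> Suc q' - p'" using y m by arith
      ultimately show ?thesis unfolding M_def by simp
    qed
  qed
  have in1: "Suc t - i \<in> S" using memS assms by simp
  have in2: "Suc j - s \<in> S" using memS assms by simp
  have in3: "L \<in> S \<or> L = 0"
  proof (cases "L \<in> A")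
    case True
    then obtain p q where m: "L = Suc q - p" "maxpal T p q" "i + t < p + q" "p + q < s + j"
      unfolding A_def by blast
    have P: "palT T p q" using m(2) pal_iff unfolding maxpal_def by blast
    have "i \<le> p \<and> q \<le> j" using inner[OF assms(1,3,4,5,7,8,9,11) P m(3,4)] .
    moreover have "p \<le> Suc q" "pal (sub T p q)" using m(2) unfolding maxpal_def by blast+
    ultimately show ?thesis using memS m(1) by blast
  next
    case False then show ?thesis using L_in by blast
  qed
  have "M = Suc t - i \<or> M = Suc j - s \<or> M = L" unfolding M_def by linarith
  moreover have "M = L \<Longrightarrow> L = 0 \<Longrightarrow> M = Suc t - i" unfolding M_def by linarith
  ultimately have MS: "M \<in> S" using in1 in2 in3 by metis
  have "lps_len (sub T i j) = Max S" unfolding lps_len_def S_def by simp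
  then have part1: "lps_len (sub T i j) = M" using Max_eqI[OF finS upper MS] by simp
  have part2: "i + t \<le> s + j - 2 \<longrightarrow> L = Max (MP T ` {i + t .. s + j - 2})"
  proof
    assume rng: "i + t \<le> s + j - 2"
    have eqA: "A = MP T ` {i + t .. s + j - 2}"
    proof
      show "A \<subseteq> MP T ` {i + t .. s + j - 2}"
      proof
        fix x assume "x \<in> A"
        then obtain p q where m: "x = Suc q - p" "maxpal T p q" "i + t < p + q" "p + q < s + j"
          unfolding A_def by blast
        have "MP T (p+q-1) = x" using MP_eq[OF m(2)] m(1) by simp
        moreover have "p+q-1 \<in> {i + t .. s + j - 2}" using m(3,4) by auto
        ultimately show "x \<in> MP T ` {i + t .. s + j - 2}" by blast
      qed
    next
      show "MP T ` {i + t .. s + j - 2} \<subseteq> A"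
      proof
        fix x assume "x \<in> MP T ` {i + t .. s + j - 2}"
        then obtain k where k: "x = MP T k" "i + t \<le> k" "k \<le> s + j - 2" by auto
        have "3 \<le> Suc k" "Suc k \<le> 2 * length T" using k(2,3) assms(1,3,4,9) by arith+
        then obtain p q where m: "maxpal T p q" "p + q = Suc k" using center_ex by blast
        have "MP T k = Suc q - p" using MP_eq[OF m(1)] m(2) by simp
        moreover have "i + t < p + q" "p + q < s + j" using m(2) k rng assms(1,4) by arith+
        ultimately show "x \<in> A" unfolding A_def using k(1) m(1) by blast
      qed
    qed
    have "i + t \<in> {i + t .. s + j - 2}" using rng by simp
    then have ne: "A \<noteq> {}" unfolding eqA by blast
    have u: "A \<union> {0} = insert 0 A" by blast
    have "L = max 0 (Max A)" by (simp only: LA u Max_insert[OF finA ne])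
    then have "L = Max A" by simp
    then show "L = Max (MP T ` {i + t .. s + j - 2})" by (simp only: eqA)
  qed
  show ?thesis using part1 part2 unfolding M_def by blast
qed

end
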